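(* Let $n=2^m$ for a positive integer $m$. A set $C\subseteq X^n$ is an $(n,5,n-1;2^{n-1}/n)_3$ code (i.e., $|C|=2^{n-1}/n$ and any two distinct words of $C$ are at Hamming distance at least $5$) if and only if the following two conditions hold: (1) both $e(C)$ and $o(C)$ are binary codes of length $n$, size $2^{n-1}/n$ and minimum distance at least $4$; (2) whenever $\mathbf{x}_1,\mathbf{x}_2\in e(C)$ and $\mathbf{y}_1,\mathbf{y}_2\in o(C)$ satisfy $d(\mathbf{x}_1,\mathbf{y}_1)=d(\mathbf{x}_2,\mathbf{y}_2)=1$ and $d(\mathbf{x}_1,\mathbf{x}_2)=4$, we have $\mathbf{x}_1-\mathbf{x}_2\neq \mathbf{y}_1-\mathbf{y}_2$ (difference taken coordinatewise modulo $2$).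
   Context: $F^n$ is the set of binary words of length $n$; $X^n$ is the set of words of length $n$ over $\{*,0,1\}$ with exactly one $*$ (equivalently, ternary words of length $n$ and weight $n-1$). $d(\cdot,\cdot)$ denotes Hamming distance (number of differing coordinates) on $X^n\cup F^n$. A word $\mathbf{x}\in X^n$ is identified with the pair of binary words obtained by replacing $*$ by $0$ and by $1$; the one of even weight is $e(\mathbf{x})$, the one of odd weight is $o(\mathbf{x})$. For $C\subseteq X^n$, $e(C)=\{e(\mathbf{c}):\mathbf{c}\in C\}$, $o(C)=\{o(\mathbf{c}):\mathbf{c}\in C\}$. *)

theory Defs
  imports Main
begin

text \<open>Binary words are bool lists (True = 1). Words of X^n are bool option lists,
  None playing the role of the symbol *.\<close>

definition hdist :: "'a list \<Rightarrow> 'a list \<Rightarrow> nat" where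
  "hdist xs ys = card {i. i < length xs \<and> xs ! i \<noteq> ys ! i}"

definition Fn :: "nat \<Rightarrow> bool list set" where
  "Fn n = {x. length x = n}"

definition Xn :: "nat \<Rightarrow> bool option list set" where
  "Xn n = {x. length x = n \<and> card {i. i < n \<and> x ! i = None} = 1}"

definition weight :: "bool list \<Rightarrow> nat" where
  "weight x = length (filter id x)"

definition fill :: "bool option list \<Rightarrow> bool \<Rightarrow> bool list" where
  "fill x b = map (\<lambda>c. case c of None \<Rightarrow> b | Some v \<Rightarrow> v) x"

definition e_word :: "bool option list \<Rightarrow> bool list" where
  "e_word x = (if even (weight (fill x False)) then fill x False else fill x True)"

definition o_word :: "bool option list \<Rightarrow> bool list" where
  "o_word x = (if odd (weight (fill x False)) then fill x False else fill x True)"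

definition bdiff :: "bool list \<Rightarrow> bool list \<Rightarrow> bool list" where
  "bdiff x y = map (\<lambda>(a, b). a \<noteq> b) (zip x y)"

definition ternary_code :: "nat \<Rightarrow> nat \<Rightarrow> nat \<Rightarrow> bool option list set \<Rightarrow> bool" where
  "ternary_code n dmin N C \<longleftrightarrow> C \<subseteq> Xn n \<and> card C = N \<and>
     (\<forall>c1\<in>C. \<forall>c2\<in>C. c1 \<noteq> c2 \<longrightarrow> hdist c1 c2 \<ge> dmin)"

definition binary_code :: "nat \<Rightarrow> nat \<Rightarrow> nat \<Rightarrow> bool list set \<Rightarrow> bool" where
  "binary_code n dmin N B \<longleftrightarrow> B \<subseteq> Fn n \<and> card B = N \<and>
     (\<forall>x1\<in>B. \<forall>x2\<in>B. x1 \<noteq> x2 \<longrightarrow> hdist x1 x2 \<ge> dmin)"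

end

theory Submission
  imports Defs
begin

lemma hdist_sum: "length xs = n \<Longrightarrow> hdist xs ys = (\<Sum>i<n. if xs!i \<noteq> ys!i then 1 else 0)"
proof -
  assume l: "length xs = n"
  have "{i. i < length xs \<and> xs!i\<noteq>ys!i} = {i\<in>{..<n}. xs!i\<noteq>ys!i}" using l by auto
  then show ?thesis unfolding hdist_def by (simp add: sum.inter_filter[symmetric])
qed

lemma weight_sum: "length xs = n \<Longrightarrow> weight xs = (\<Sum>i<n. if xs!i then 1 else 0)"
proof -
  assume l: "length xs = n"
  have "{i. i < length xs \<and> xs!i} = {i\<in>{..<n}. xs!i}" using l by auto
  then show ?thesis unfolding weight_def length_filter_conv_card by (simp add: sum.inter_filter[symmetric])
qed

lemma sum_split2: "p1<n \<Longrightarrow> p2<n \<Longrightarrow> (\<Sum>i<n. f i) = (\<Sum>i\<in>{..<n}-{p1,p2}. f i) + f p1 + (if p1=p2 then 0 else f p2)"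
  for f :: "nat \<Rightarrow> nat"
proof -
  assume a: "p1<n" "p2<n"
  have "(\<Sum>i<n. f i) = f p1 + (\<Sum>i\<in>{..<n}-{p1}. f i)" using a by (simp add: sum.remove)
  moreover have "p1 \<noteq> p2 \<Longrightarrow> (\<Sum>i\<in>{..<n}-{p1}. f i) = f p2 + (\<Sum>i\<in>{..<n}-{p1}-{p2}. f i)"
    using a by (intro sum.remove) auto
  ultimately show ?thesis by (cases "p1 = p2") (auto simp: Diff_insert2[symmetric] insert_commute)
qed

lemma parity: "length u = n \<Longrightarrow> length v = n \<Longrightarrow> even (hdist u v + weight u + weight v)"
proof -
  assume l: "length u = n" "length v = n"
  have "hdist u v + weight u + weight v = (\<Sum>i<n. (if u!i \<noteq> v!i then 1 else 0) + (if u!i then 1 else 0) + (if v!i then 1 else 0))"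
    using l by (simp add: hdist_sum weight_sum sum.distrib)
  also have "even \<dots>" by (intro dvd_sum) auto
  finally show ?thesis .
qed

lemma fill_nth: "i < length c \<Longrightarrow> fill c b ! i = (case c!i of None \<Rightarrow> b | Some v \<Rightarrow> v)"
  by (simp add: fill_def)

lemma bdiff_nth: "i < length x \<Longrightarrow> i < length y \<Longrightarrow> bdiff x y ! i = (x!i \<noteq> y!i)"
  by (simp add: bdiff_def)

lemma eo: "e_word c = fill c (odd (weight (fill c False)))" "o_word c = fill c (\<not> odd (weight (fill c False)))"
  by (auto simp: e_word_def o_word_def)

lemma Xn_star: assumes "c \<in> Xn n" obtains p where "p < n" "c!p = None" "\<And>i. i<n \<Longrightarrow> i\<noteq>p \<Longrightarrow> c!i \<noteq> None"
proof -
  from assms have "card {i. i < n \<and> c ! i = None} = 1" by (simp add: Xn_def)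
  then obtain p where P: "{i. i < n \<and> c ! i = None} = {p}" by (rule card_1_singletonE)
  have "p \<in> {i. i < n \<and> c ! i = None}" using P by simp
  then have 1: "p < n" "c!p = None" by simp_all
  have 2: "c!i \<noteq> None" if "i<n" "i\<noteq>p" for i
  proof
    assume "c!i = None"
    then have "i \<in> {i. i < n \<and> c ! i = None}" using that by simp
    then show False using P that by simp
  qed
  show ?thesis using that 1 2 by blast
qed


locale pair =
  fixes n :: nat and a b :: "bool option list" and pa pb :: nat
  assumes la: "length a = n" and lb: "length b = n" and pan: "pa < n" and pbn: "pb < n"
   and sa: "a!pa = None" and sb: "b!pb = None"
   and na: "\<And>i. i<n \<Longrightarrow> i\<noteq>pa \<Longrightarrow> a!i \<noteq> None"
   and nb: "\<And>i. i<n \<Longrightarrow> i\<noteq>pb \<Longrightarrow> b!i \<noteq> None"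
begin

definition D :: nat where "D = (\<Sum>i\<in>{..<n}-{pa,pb}. if a!i \<noteq> b!i then 1 else 0)"

lemma dist_ab: "hdist a b = D + (if pa = pb then 0 else 2)"
proof -
  have "hdist a b = D + (if a!pa \<noteq> b!pa then 1 else 0) + (if pa = pb then 0 else (if a!pb \<noteq> b!pb then 1 else 0))"
    unfolding D_def using la pan pbn by (simp add: hdist_sum sum_split2[of pa n pb])
  then show ?thesis using sa sb na[of pb] nb[of pa] pan pbn by (cases "pa = pb") auto
qed

lemma dist_fill: "hdist (fill a x) (fill b y) = D + (if pa = pb then (if x \<noteq> y then 1 else 0)
   else (if x \<noteq> the (b!pa) then 1 else 0) + (if the (a!pb) \<noteq> y then 1 else 0))"
proof -
  have l: "length (fill a x) = n" using la by (simp add: fill_def)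
  have pw: "(if fill a x ! i \<noteq> fill b y ! i then (1::nat) else 0) = (if a ! i \<noteq> b ! i then 1 else (0::nat))"
    if i: "i \<in> {..<n}-{pa,pb}" for i
  proof -
    obtain u v where "a!i = Some u" "b!i = Some v" using na[of i] nb[of i] i by fastforce
    then show ?thesis using i la lb by (simp add: fill_nth)
  qed
  have eqD: "(\<Sum>i\<in>{..<n}-{pa,pb}. if fill a x ! i \<noteq> fill b y ! i then 1 else 0) = D"
    unfolding D_def using pw by (intro sum.cong refl) simp
  have "hdist (fill a x) (fill b y) = D + (if fill a x!pa \<noteq> fill b y!pa then 1 else 0) + (if pa = pb then 0 else (if fill a x!pb \<noteq> fill b y!pb then 1 else 0))"
    using l pan pbn eqD by (simp add: hdist_sum sum_split2[of pa n pb])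
  moreover have "fill a x ! pa = x" "fill b y ! pb = y" using sa sb pan pbn la lb by (simp_all add: fill_nth)
  moreover have "pa \<noteq> pb \<Longrightarrow> fill b y ! pa = the (b!pa) \<and> fill a x ! pb = the (a!pb)"
  proof -
    assume ne: "pa \<noteq> pb"
    obtain u where u: "a!pb = Some u" using na[OF pbn] ne by fastforce
    obtain v where v: "b!pa = Some v" using nb[OF pan] ne by fastforce
    show ?thesis using u v pan pbn la lb by (simp add: fill_nth)
  qed
  ultimately show ?thesis by (cases "pa = pb") simp_all
qed

lemma bdiff_same: "pa = pb \<Longrightarrow> bdiff (fill a x) (fill b y) = bdiff (fill a (\<not>x)) (fill b (\<not>y))"
proof -
  assume e: "pa = pb"
  have "\<And>i. i < n \<Longrightarrow> bdiff (fill a x) (fill b y) ! i = bdiff (fill a (\<not>x)) (fill b (\<not>y)) ! i"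
  proof -
    fix i assume i: "i < n"
    show "bdiff (fill a x) (fill b y) ! i = bdiff (fill a (\<not>x)) (fill b (\<not>y)) ! i"
    proof (cases "i = pa")
      case True then show ?thesis using i la lb sa sb e by (simp add: bdiff_nth fill_def)
    next
      case False
      then obtain u v where "a!i = Some u" "b!i = Some v" using na[of i] nb[of i] i e by fastforce
      then show ?thesis using i la lb by (simp add: bdiff_nth fill_def)
    qed
  qed
  then show ?thesis using la lb by (intro nth_equalityI) (auto simp: bdiff_def fill_def)
qed

lemma bdiff_diff: "pa \<noteq> pb \<Longrightarrow> bdiff (fill a x) (fill b y) \<noteq> bdiff (fill a (\<not>x)) (fill b y')"
proof
  assume ne: "pa \<noteq> pb" and eq: "bdiff (fill a x) (fill b y) = bdiff (fill a (\<not>x)) (fill b y')"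
  obtain v where v: "b!pa = Some v" using nb[OF pan] ne by fastforce
  have "bdiff (fill a x) (fill b y) ! pa = bdiff (fill a (\<not>x)) (fill b y') ! pa" using eq by simp
  then show False using pan la lb v sa by (cases x; cases v; simp add: bdiff_def fill_def)
qed

lemma hdist_zero: "hdist (fill a x) (fill b y) = 0 \<longleftrightarrow> fill a x = fill b y"
proof -
  have "hdist (fill a x) (fill b y) = 0 \<longleftrightarrow> {i. i < n \<and> fill a x ! i \<noteq> fill b y ! i} = {}"
    unfolding hdist_def using la by (simp add: fill_def)
  also have "\<dots> \<longleftrightarrow> (\<forall>i<n. fill a x ! i = fill b y ! i)" by auto
  also have "\<dots> \<longleftrightarrow> fill a x = fill b y" using la lb by (simp add: list_eq_iff_nth_eq fill_def del: nth_map)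
  finally show ?thesis .
qed

lemma hdist_ab_zero: "hdist a b = 0 \<Longrightarrow> a = b"
proof -
  assume "hdist a b = 0"
  then have "{i. i < n \<and> a ! i \<noteq> b ! i} = {}" unfolding hdist_def using la by simp
  then show "a = b" using la lb by (auto intro: nth_equalityI)
qed

lemma same_fill: "pa = pb \<Longrightarrow> hdist (fill a x) (fill b y) = D + (if x \<noteq> y then 1 else 0)"
  using dist_fill[of x y] by simp

lemma same_ab: "pa = pb \<Longrightarrow> hdist a b = D"
  using dist_ab by simp

lemma diff_ab: "pa \<noteq> pb \<Longrightarrow> hdist a b = D + 2"
  using dist_ab by simp

lemma diff_fill_ge: "hdist (fill a x) (fill b y) \<ge> D"
  using dist_fill[of x y] by simp

lemma diff_sum: "pa \<noteq> pb \<Longrightarrow> hdist (fill a x) (fill b y) + hdist (fill a (\<not>x)) (fill b (\<not>y)) = 2 * D + 2"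
  using dist_fill[of x y] dist_fill[of "\<not>x" "\<not>y"] by (cases x; cases y) auto

lemma fwd:
  assumes ee: "even (hdist (fill a xa) (fill b xb))" and eo: "even (hdist (fill a (\<not>xa)) (fill b (\<not>xb)))"
    and d5: "hdist a b \<ge> 5"
  shows "hdist (fill a xa) (fill b xb) \<ge> 4" "hdist (fill a (\<not>xa)) (fill b (\<not>xb)) \<ge> 4"
    "hdist (fill a x) (fill b y) \<ge> 3"
    "hdist (fill a xa) (fill b xb) = 4 \<Longrightarrow> bdiff (fill a xa) (fill b xb) = bdiff (fill a (\<not>xa)) (fill b (\<not>xb)) \<Longrightarrow> False"
proof -
  have D3: "D \<ge> 3" using d5 dist_ab by (cases "pa = pb") auto
  have g1: "hdist (fill a xa) (fill b xb) \<ge> 3" "hdist (fill a (\<not>xa)) (fill b (\<not>xb)) \<ge> 3" "hdist (fill a x) (fill b y) \<ge> 3"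
    using D3 diff_fill_ge[of xa xb] diff_fill_ge[of "\<not>xa" "\<not>xb"] diff_fill_ge[of x y] by simp_all
  show "hdist (fill a xa) (fill b xb) \<ge> 4"
  proof (rule ccontr)
    assume "\<not> ?thesis" then have "hdist (fill a xa) (fill b xb) = 3" using g1 by linarith
    then show False using ee by simp
  qed
  show "hdist (fill a (\<not>xa)) (fill b (\<not>xb)) \<ge> 4"
  proof (rule ccontr)
    assume "\<not> ?thesis" then have "hdist (fill a (\<not>xa)) (fill b (\<not>xb)) = 3" using g1 by linarith
    then show False using eo by simp
  qed
  show "hdist (fill a x) (fill b y) \<ge> 3" by (rule g1(3))
  assume h4: "hdist (fill a xa) (fill b xb) = 4" and bd: "bdiff (fill a xa) (fill b xb) = bdiff (fill a (\<not>xa)) (fill b (\<not>xb))"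
  show False
  proof (cases "pa = pb")
    case True then show False using h4 d5 diff_fill_ge[of xa xb] same_ab by linarith
  next
    case False then show False using bdiff_diff bd by blast
  qed
qed

lemma bwd:
  assumes ee: "even (hdist (fill a xa) (fill b xb))"
    and ne: "a \<noteq> b"
    and c1: "fill a xa \<noteq> fill b xb \<Longrightarrow> hdist (fill a xa) (fill b xb) \<ge> 4"
    and c2: "fill a (\<not>xa) \<noteq> fill b (\<not>xb) \<Longrightarrow> hdist (fill a (\<not>xa)) (fill b (\<not>xb)) \<ge> 4"
    and c3: "hdist (fill a xa) (fill b xb) = 4 \<Longrightarrow> bdiff (fill a xa) (fill b xb) \<noteq> bdiff (fill a (\<not>xa)) (fill b (\<not>xb))"
  shows "fill a xa \<noteq> fill b xb" "hdist a b \<ge> 5"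
proof -
  have z1: "hdist (fill a xa) (fill b xb) = 0 \<longleftrightarrow> fill a xa = fill b xb" by (rule hdist_zero)
  have z2: "hdist (fill a (\<not>xa)) (fill b (\<not>xb)) = 0 \<longleftrightarrow> fill a (\<not>xa) = fill b (\<not>xb)" by (rule hdist_zero)
  have nz: "hdist a b \<noteq> 0" using ne hdist_ab_zero by blast
  have "fill a xa \<noteq> fill b xb \<and> hdist a b \<ge> 5"
  proof (cases "pa = pb")
    case True
    then have bd: "bdiff (fill a xa) (fill b xb) = bdiff (fill a (\<not>xa)) (fill b (\<not>xb))" by (rule bdiff_same)
    have E: "hdist (fill a xa) (fill b xb) = D + (if xa \<noteq> xb then 1 else 0)" using True by (rule same_fill)
    have Dab: "hdist a b = D" using True by (rule same_ab)
    have D0: "D \<noteq> 0" using nz Dab by simp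
    have n0: "fill a xa \<noteq> fill b xb"
    proof
      assume "fill a xa = fill b xb"
      then have "hdist (fill a xa) (fill b xb) = 0" using z1 by simp
      then show False using E D0 by simp
    qed
    have E4: "hdist (fill a xa) (fill b xb) \<ge> 4" using c1 n0 by blast
    have E5: "hdist (fill a xa) (fill b xb) \<noteq> 4" using c3 bd by blast
    have E6: "hdist (fill a xa) (fill b xb) \<ge> 6"
    proof (rule ccontr)
      assume "\<not> ?thesis" then have "hdist (fill a xa) (fill b xb) = 5" using E4 E5 by linarith
      then show False using ee by simp
    qed
    have "D \<ge> 5" using E6 E by (cases "xa = xb") auto
    then show ?thesis using n0 Dab by simp
  next
    case False
    have S: "hdist (fill a xa) (fill b xb) + hdist (fill a (\<not>xa)) (fill b (\<not>xb)) = 2 * D + 2"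
      using False by (rule diff_sum)
    have G1: "hdist (fill a xa) (fill b xb) \<ge> D" "hdist (fill a (\<not>xa)) (fill b (\<not>xb)) \<ge> D"
      by (rule diff_fill_ge)+
    have n1: "fill a xa \<noteq> fill b xb"
    proof
      assume "fill a xa = fill b xb"
      then have h0: "hdist (fill a xa) (fill b xb) = 0" using z1 by simp
      then have "D = 0" using G1 by simp
      then have "hdist (fill a (\<not>xa)) (fill b (\<not>xb)) = 2" using S h0 by simp
      moreover then have "fill a (\<not>xa) \<noteq> fill b (\<not>xb)" using z2 by auto
      ultimately show False using c2 by simp
    qed
    have n2: "fill a (\<not>xa) \<noteq> fill b (\<not>xb)"
    proof
      assume "fill a (\<not>xa) = fill b (\<not>xb)"
      then have h0: "hdist (fill a (\<not>xa)) (fill b (\<not>xb)) = 0" using z2 by simp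
      then have "D = 0" using G1 by simp
      then have "hdist (fill a xa) (fill b xb) = 2" using S h0 by simp
      then show False using c1 n1 by simp
    qed
    have "D \<ge> 3" using c1[OF n1] c2[OF n2] S by linarith
    then show ?thesis using n1 diff_ab[OF False] by simp
  qed
  then show "fill a xa \<noteq> fill b xb" "hdist a b \<ge> 5" by auto
qed

end

definition ebit :: "bool option list \<Rightarrow> bool" where
  "ebit c = odd (weight (fill c False))"

lemma eo2: "e_word c = fill c (ebit c)" "o_word c = fill c (\<not> ebit c)"
  unfolding ebit_def by (rule eo)+

lemma len_fill: "length (fill c b) = length c" by (simp add: fill_def)

lemma hdist_self: "hdist x x = 0" by (simp add: hdist_def)

lemma Xn_len: "c \<in> Xn n \<Longrightarrow> length c = n" by (simp add: Xn_def)

lemma single: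
  assumes c: "c \<in> Xn n"
  shows "even (weight (e_word c))" "odd (weight (o_word c))" "hdist (e_word c) (o_word c) = 1"
proof -
  obtain p where p: "p < n" "c!p = None" "\<And>i. i<n \<Longrightarrow> i\<noteq>p \<Longrightarrow> c!i \<noteq> None"
    using Xn_star[OF c] by blast
  interpret pair n c c p p using p Xn_len[OF c] by unfold_locales auto
  have D0: "D = 0" unfolding D_def by simp
  have h: "hdist (fill c x) (fill c (\<not>x)) = 1" for x using dist_fill[of x "\<not>x"] D0 by simp
  have par: "even (hdist (fill c False) (fill c True) + weight (fill c False) + weight (fill c True))"
    using Xn_len[OF c] by (intro parity) (simp_all add: len_fill)
  then have "even (1 + (weight (fill c False) + weight (fill c True)))" by (simp only: h[of False, simplified] add.assoc One_nat_def)
  then have par2: "odd (weight (fill c False) + weight (fill c True))" by presburger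
  show "even (weight (e_word c))" "odd (weight (o_word c))"
    using par2 unfolding eo2 ebit_def by auto
  show "hdist (e_word c) (o_word c) = 1" unfolding eo2 by (rule h)
qed

lemma even_eo:
  assumes a: "a \<in> Xn n" and b: "b \<in> Xn n"
  shows "even (hdist (e_word a) (e_word b))" "even (hdist (o_word a) (o_word b))"
proof -
  have l: "length (e_word a) = n" "length (e_word b) = n" "length (o_word a) = n" "length (o_word b) = n"
    using Xn_len[OF a] Xn_len[OF b] by (simp_all add: eo2 len_fill)
  show "even (hdist (e_word a) (e_word b))" using parity[OF l(1,2)] single(1)[OF a] single(1)[OF b] by simp
  show "even (hdist (o_word a) (o_word b))" using parity[OF l(3,4)] single(2)[OF a] single(2)[OF b] by simp
qed

lemma pair_fwd:
  assumes a: "a \<in> Xn n" and b: "b \<in> Xn n" and d5: "hdist a b \<ge> 5"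
  shows "hdist (e_word a) (e_word b) \<ge> 4" "hdist (o_word a) (o_word b) \<ge> 4"
    "hdist (fill a x) (fill b y) \<ge> 3"
    "hdist (e_word a) (e_word b) = 4 \<Longrightarrow> bdiff (e_word a) (e_word b) = bdiff (o_word a) (o_word b) \<Longrightarrow> False"
proof -
  obtain pa where pa: "pa < n" "a!pa = None" "\<And>i. i<n \<Longrightarrow> i\<noteq>pa \<Longrightarrow> a!i \<noteq> None"
    using Xn_star[OF a] by blast
  obtain pb where pb: "pb < n" "b!pb = None" "\<And>i. i<n \<Longrightarrow> i\<noteq>pb \<Longrightarrow> b!i \<noteq> None"
    using Xn_star[OF b] by blast
  interpret pair n a b pa pb using pa pb Xn_len[OF a] Xn_len[OF b] by unfold_locales auto
  note ev = even_eo[OF a b, unfolded eo2]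
  note F = fwd[OF ev d5]
  show "hdist (e_word a) (e_word b) \<ge> 4" "hdist (o_word a) (o_word b) \<ge> 4"
    "hdist (fill a x) (fill b y) \<ge> 3"
    "hdist (e_word a) (e_word b) = 4 \<Longrightarrow> bdiff (e_word a) (e_word b) = bdiff (o_word a) (o_word b) \<Longrightarrow> False"
    unfolding eo2 using F by blast+
qed

lemma pair_bwd:
  assumes a: "a \<in> Xn n" and b: "b \<in> Xn n" and ne: "a \<noteq> b"
    and c1: "e_word a \<noteq> e_word b \<Longrightarrow> hdist (e_word a) (e_word b) \<ge> 4"
    and c2: "o_word a \<noteq> o_word b \<Longrightarrow> hdist (o_word a) (o_word b) \<ge> 4"
    and c3: "hdist (e_word a) (e_word b) = 4 \<Longrightarrow> bdiff (e_word a) (e_word b) \<noteq> bdiff (o_word a) (o_word b)"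
  shows "e_word a \<noteq> e_word b" "hdist a b \<ge> 5"
proof -
  obtain pa where pa: "pa < n" "a!pa = None" "\<And>i. i<n \<Longrightarrow> i\<noteq>pa \<Longrightarrow> a!i \<noteq> None"
    using Xn_star[OF a] by blast
  obtain pb where pb: "pb < n" "b!pb = None" "\<And>i. i<n \<Longrightarrow> i\<noteq>pb \<Longrightarrow> b!i \<noteq> None"
    using Xn_star[OF b] by blast
  interpret pair n a b pa pb using pa pb Xn_len[OF a] Xn_len[OF b] by unfold_locales auto
  note ev = even_eo(1)[OF a b, unfolded eo2]
  note B = bwd[OF ev ne c1[unfolded eo2] c2[unfolded eo2] c3[unfolded eo2]]
  show "e_word a \<noteq> e_word b" "hdist a b \<ge> 5" unfolding eo2 using B by blast+
qed

theorem lemma2: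
  fixes m n :: nat and C :: "bool option list set"
  assumes "m > 0" and "n = 2 ^ m" and "C \<subseteq> Xn n"
  shows "ternary_code n 5 (2 ^ (n - 1) div n) C \<longleftrightarrow>
    (binary_code n 4 (2 ^ (n - 1) div n) (e_word ` C) \<and>
     binary_code n 4 (2 ^ (n - 1) div n) (o_word ` C) \<and>
     (\<forall>x1\<in>e_word ` C. \<forall>x2\<in>e_word ` C. \<forall>y1\<in>o_word ` C. \<forall>y2\<in>o_word ` C.
        hdist x1 y1 = 1 \<and> hdist x2 y2 = 1 \<and> hdist x1 x2 = 4 \<longrightarrow>
        bdiff x1 x2 \<noteq> bdiff y1 y2))"
proof -
  define N where "N = 2 ^ (n - 1) div n"
  have X: "\<And>c. c \<in> C \<Longrightarrow> c \<in> Xn n" using assms(3) by blast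
  have eF: "e_word ` C \<subseteq> Fn n" "o_word ` C \<subseteq> Fn n"
    using X by (auto simp: Fn_def eo2 len_fill Xn_len)
  show ?thesis unfolding N_def[symmetric]
  proof
    assume T: "ternary_code n 5 N C"
    then have cC: "card C = N" and d: "\<And>a b. a \<in> C \<Longrightarrow> b \<in> C \<Longrightarrow> a \<noteq> b \<Longrightarrow> hdist a b \<ge> 5"
      unfolding ternary_code_def by auto
    have de: "hdist (e_word a) (e_word b) \<ge> 4" "hdist (o_word a) (o_word b) \<ge> 4"
      if "a \<in> C" "b \<in> C" "a \<noteq> b" for a b
      using pair_fwd(1,2)[OF X X d] that by blast+
    have ie: "inj_on e_word C"
      by (rule inj_onI) (metis de(1) hdist_self not_numeral_le_zero)
    have io: "inj_on o_word C"
      by (rule inj_onI) (metis de(2) hdist_self not_numeral_le_zero)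
    have B1: "binary_code n 4 N (e_word ` C)"
      unfolding binary_code_def using eF cC card_image[OF ie] de by auto
    have de2: "hdist (o_word a) (o_word b) \<ge> 4" if "a \<in> C" "b \<in> C" "o_word a \<noteq> o_word b" for a b
      using de(2) that by blast
    have B2: "binary_code n 4 N (o_word ` C)"
      unfolding binary_code_def using eF cC card_image[OF io] de2 by auto
    have same: "a = a'" if "a \<in> C" "a' \<in> C" "hdist (e_word a) (o_word a') = 1" for a a'
    proof (rule ccontr)
      assume "a \<noteq> a'"
      then have "hdist (fill a (ebit a)) (fill a' (\<not> ebit a')) \<ge> 3"
        using pair_fwd(3)[OF X X d] that by blast
      then show False using that(3) unfolding eo2 by simp
    qed
    have B3: "\<forall>x1\<in>e_word ` C. \<forall>x2\<in>e_word ` C. \<forall>y1\<in>o_word ` C. \<forall>y2\<in>o_word ` C.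
        hdist x1 y1 = 1 \<and> hdist x2 y2 = 1 \<and> hdist x1 x2 = 4 \<longrightarrow>
        bdiff x1 x2 \<noteq> bdiff y1 y2"
    proof (intro ballI impI)
      fix x1 x2 y1 y2 assume x1: "x1 \<in> e_word ` C" and x2: "x2 \<in> e_word ` C"
        and y1: "y1 \<in> o_word ` C" and y2: "y2 \<in> o_word ` C"
        and h: "hdist x1 y1 = 1 \<and> hdist x2 y2 = 1 \<and> hdist x1 x2 = 4"
      obtain a where a: "a \<in> C" "x1 = e_word a" using x1 by blast
      obtain b where b: "b \<in> C" "x2 = e_word b" using x2 by blast
      obtain a' where a': "a' \<in> C" "y1 = o_word a'" using y1 by blast
      obtain b' where b': "b' \<in> C" "y2 = o_word b'" using y2 by blast
      have "a = a'" using same a a' h by blast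
      moreover have "b = b'" using same b b' h by blast
      moreover have "a \<noteq> b"
      proof
        assume "a = b"
        then have "hdist x1 x2 = 0" using a b hdist_self by simp
        then show False using h by simp
      qed
      ultimately show "bdiff x1 x2 \<noteq> bdiff y1 y2"
        using pair_fwd(4)[OF X[OF a(1)] X[OF b(1)] d[OF a(1) b(1)]] a b a' b' h by blast
    qed
    show "binary_code n 4 N (e_word ` C) \<and> binary_code n 4 N (o_word ` C) \<and> (\<forall>x1\<in>e_word ` C. \<forall>x2\<in>e_word ` C. \<forall>y1\<in>o_word ` C. \<forall>y2\<in>o_word ` C.
        hdist x1 y1 = 1 \<and> hdist x2 y2 = 1 \<and> hdist x1 x2 = 4 \<longrightarrow>
        bdiff x1 x2 \<noteq> bdiff y1 y2)"
      using B1 B2 B3 by blast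
  next
    assume R: "binary_code n 4 N (e_word ` C) \<and> binary_code n 4 N (o_word ` C) \<and> (\<forall>x1\<in>e_word ` C. \<forall>x2\<in>e_word ` C. \<forall>y1\<in>o_word ` C. \<forall>y2\<in>o_word ` C.
        hdist x1 y1 = 1 \<and> hdist x2 y2 = 1 \<and> hdist x1 x2 = 4 \<longrightarrow>
        bdiff x1 x2 \<noteq> bdiff y1 y2)"
    then have B1: "binary_code n 4 N (e_word ` C)" and B2: "binary_code n 4 N (o_word ` C)"
      and B3: "(\<forall>x1\<in>e_word ` C. \<forall>x2\<in>e_word ` C. \<forall>y1\<in>o_word ` C. \<forall>y2\<in>o_word ` C.
        hdist x1 y1 = 1 \<and> hdist x2 y2 = 1 \<and> hdist x1 x2 = 4 \<longrightarrow>
        bdiff x1 x2 \<noteq> bdiff y1 y2)" by blast+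
    have c1: "hdist (e_word a) (e_word b) \<ge> 4" if "a \<in> C" "b \<in> C" "e_word a \<noteq> e_word b" for a b
      using B1 that unfolding binary_code_def by blast
    have c2: "hdist (o_word a) (o_word b) \<ge> 4" if "a \<in> C" "b \<in> C" "o_word a \<noteq> o_word b" for a b
      using B2 that unfolding binary_code_def by blast
    have c3: "bdiff (e_word a) (e_word b) \<noteq> bdiff (o_word a) (o_word b)"
      if "a \<in> C" "b \<in> C" "hdist (e_word a) (e_word b) = 4" for a b
      using B3 that single(3)[OF X[OF that(1)]] single(3)[OF X[OF that(2)]] by blast
    have PB: "e_word a \<noteq> e_word b \<and> hdist a b \<ge> 5" if "a \<in> C" "b \<in> C" "a \<noteq> b" for a b
      using pair_bwd[OF X[OF that(1)] X[OF that(2)] that(3) c1[OF that(1,2)] c2[OF that(1,2)] c3[OF that(1,2)]]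
      by blast
    have ie: "inj_on e_word C" by (rule inj_onI) (use PB in blast)
    have "card C = N" using card_image[OF ie] B1 unfolding binary_code_def by simp
    then show "ternary_code n 5 N C" unfolding ternary_code_def using assms(3) PB by blast
  qed
qed

end
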